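(* Let $\phi:\mathbb{R}\to\mathbb{R}$ be smooth with $\phi(x)\to0$ as $|x|\to\infty$. Suppose $f_+,f_-$ are equilibrium solutions of $u_t=u_{xx}-u^2+\phi(x)$ (i.e. $0=f_\pm''-f_\pm^2+\phi$) which are smooth and bounded with bounded first and second derivatives, are asymptotic to $6/x^2$ for large $x$ (so lie in $L^1(\mathbb{R})$), satisfy $f_+(x)>f_-(x)$ for all $x$, and such that there is no equilibrium $f_2$ with $f_+(x)>f_2(x)>f_-(x)$ for all $x$. Suppose further that $(g_c,\phi_c)_{c\in[0,1)}$ is a family with $0=g_c''-g_c^2+\phi_c$, $g_0=f_-$, $\phi_0=\phi$, and $\phi_a(x)<\phi_b(x)$, $g_a(x)>g_b(x)$ for all $x$ whenever $a>b$. For $c\in[0,1)$ let $$W_c=\{v\in C^2(\mathbb{R}) : g_c(x)<v(x)<f_+(x)\text{ for all }x\}.$$ Let $U\in W_c$ have bounded first and second derivatives, and let $u$ solve the Cauchy problem $$\frac{\partial u}{\partial t}=\frac{\partial^2 u}{\partial x^2}-u^2+\phi(x),\qquad u(0,x)=U(x).$$ Then $u(t,\cdot)\in L^1(\mathbb{R})\cap L^\infty(\mathbb{R})$ for all $t>0$. Additionally, if $c\in(0,1)$, then $u(t,\cdot)$ cannot have $f_-$ as a limit as $t\to\infty$.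
   Context: An equilibrium solution is a time-independent solution of the equation. *)

theory Defs
  imports "HOL-Analysis.Analysis" "HOL-Library.Landau_Symbols"
begin

definition smooth_fun :: "(real \<Rightarrow> real) \<Rightarrow> bool" where
  "smooth_fun f \<longleftrightarrow> (\<forall>n. \<forall>x. ((deriv ^^ n) f) differentiable (at x))"

definition C2_fun :: "(real \<Rightarrow> real) \<Rightarrow> bool" where
  "C2_fun f \<longleftrightarrow> (\<forall>x. f differentiable (at x)) \<and> (\<forall>x. deriv f differentiable (at x))
                 \<and> continuous_on UNIV (deriv (deriv f))"

definition equilibrium :: "(real \<Rightarrow> real) \<Rightarrow> (real \<Rightarrow> real) \<Rightarrow> bool" where
  "equilibrium phi f \<longleftrightarrow> C2_fun f \<and> (\<forall>x. deriv (deriv f) x - (f x)^2 + phi x = 0)"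

text \<open>Classical solution u(t,x) of the Cauchy problem u_t = u_xx - u^2 + phi(x), u(0,x) = U(x),
  for t \<ge> 0, in the standard uniqueness class (bounded on every strip [0,T] x R).\<close>
definition cauchy_solution ::
  "(real \<Rightarrow> real) \<Rightarrow> (real \<Rightarrow> real) \<Rightarrow> (real \<Rightarrow> real \<Rightarrow> real) \<Rightarrow> bool" where
  "cauchy_solution phi U u \<longleftrightarrow>
     u 0 = U \<and>
     continuous_on ({0..} \<times> UNIV) (\<lambda>(t,x). u t x) \<and>
     (\<forall>t>0. \<forall>x. (\<lambda>s. u s x) differentiable (at t)) \<and>
     (\<forall>t>0. \<forall>x. u t differentiable (at x) \<and> deriv (u t) differentiable (at x)) \<and>
     continuous_on ({0<..} \<times> UNIV) (\<lambda>(t,x). deriv (\<lambda>s. u s x) t) \<and>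
     continuous_on ({0<..} \<times> UNIV) (\<lambda>(t,x). deriv (deriv (u t)) x) \<and>
     (\<forall>t>0. \<forall>x. deriv (\<lambda>s. u s x) t = deriv (deriv (u t)) x - (u t x)^2 + phi x) \<and>
     (\<forall>T\<ge>0. bounded ((\<lambda>(t,x). u t x) ` ({0..T} \<times> UNIV)))"

end

theory Submission imports Defs "HOL-Probability.Sinc_Integral" begin

lemma second_deriv_min:
  fixes f f' :: "real \<Rightarrow> real"
  assumes d1: "\<And>x. (f has_real_derivative f' x) (at x)"
    and d2: "(f' has_real_derivative D) (at x0)"
    and mn: "\<And>x. f x0 \<le> f x"
  shows "D \<ge> 0"
proof (rule ccontr)
  assume "\<not> D \<ge> 0"
  hence D: "D < 0" by simp
  have f0: "f' x0 = 0"
    using DERIV_local_min[OF d1[of x0], of 1] mn by auto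
  obtain d where d: "d > 0" and lt: "\<forall>h>0. h < d \<longrightarrow> f' x0 > f' (x0 + h)"
    using DERIV_neg_dec_right[OF d2 D] by blast
  define h where "h = d / 2"
  have h: "h > 0" "h < d" using d by (auto simp: h_def)
  obtain z where z: "z > x0" "z < x0 + h" "f (x0 + h) - f x0 = (x0 + h - x0) * f' z"
    using MVT2[of x0 "x0 + h" f f'] h d1 by auto
  have "f' z < 0" using lt[rule_format, of "z - x0"] z h f0 by auto
  hence "f (x0 + h) - f x0 < 0" using z(3) h by (simp add: mult_pos_neg)
  thus False using mn[of "x0 + h"] by simp
qed


lemma comparison:
  fixes w wt wx wxx a :: "real \<Rightarrow> real \<Rightarrow> real" and T K B :: real
  assumes cont: "continuous_on ({0..T} \<times> UNIV) (\<lambda>p. w (fst p) (snd p))"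
    and bnd: "\<forall>t\<in>{0..T}. \<forall>x. \<bar>w t x\<bar> \<le> B"
    and init: "\<forall>x. w 0 x > 0"
    and dt: "\<forall>t\<in>{0<..T}. \<forall>x. ((\<lambda>s. w s x) has_real_derivative wt t x) (at t)"
    and dx: "\<forall>t\<in>{0<..T}. \<forall>x. (w t has_real_derivative wx t x) (at x)"
    and dxx: "\<forall>t\<in>{0<..T}. \<forall>x. (wx t has_real_derivative wxx t x) (at x)"
    and ineq: "\<forall>t\<in>{0<..T}. \<forall>x. wt t x \<ge> wxx t x - a t x * w t x"
    and abnd: "\<forall>t\<in>{0<..T}. \<forall>x. \<bar>a t x\<bar> \<le> K"
  shows "\<forall>t\<in>{0..T}. \<forall>x. w t x \<ge> 0"
proof (intro ballI allI)
  fix t1 x1 assume t1: "t1 \<in> {0..T}"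
  show "w t1 x1 \<ge> 0"
  proof (rule ccontr)
    assume "\<not> w t1 x1 \<ge> 0"
    hence neg: "w t1 x1 < 0" by simp
    define l where "l = \<bar>K\<bar> + 1"
    have l: "l \<ge> 1" unfolding l_def by simp
    have t1ge: "t1 \<ge> 0" using t1 by simp
    have sq1: "x1^2 \<ge> 0" by simp
    have pos1: "1 + x1^2 + 2*t1 > 0" using t1ge sq1 by linarith
    have EW1: "exp (- l * t1) * w t1 x1 < 0" using neg by (simp add: mult_pos_neg)
    define e where "e = - (exp (- l * t1) * w t1 x1) / (2 * (1 + x1^2 + 2*t1))"
    have e: "e > 0" unfolding e_def using EW1 pos1 by (intro divide_pos_pos) auto
    define y where "y = (\<lambda>t x. exp (- l * t) * w t x + e * (1 + x^2 + 2*t))"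
    have y1: "y t1 x1 = exp (- l * t1) * w t1 x1 / 2"
      unfolding y_def e_def using pos1 by (simp add: field_simps)
    hence y1neg: "y t1 x1 < 0" using EW1 by simp
    have B0: "B \<ge> 0" using bnd t1 by (meson abs_ge_zero order_trans)
    define R where "R = sqrt (B / e) + \<bar>x1\<bar> + 1"
    have Rbig: "e * (1 + x^2) \<ge> B" if "\<bar>x\<bar> \<ge> R" for x
    proof -
      have "sqrt (B / e) \<le> sqrt (x^2)" using that unfolding R_def by simp
      hence "B / e \<le> x^2" by (simp only: real_sqrt_le_iff)
      hence "B \<le> x^2 * e" using e pos_divide_le_eq[of e B "x^2"] by simp
      moreover have "e * (1 + x^2) = e + x^2 * e" by (simp add: algebra_simps)
      ultimately show ?thesis using e by linarith
    qed
    have youter: "y t x \<ge> 0" if "t \<in> {0..T}" "\<bar>x\<bar> \<ge> R" for t x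
    proof -
      have t0: "t \<ge> 0" using that by simp
      have "exp (- l * t) \<le> 1" using t0 l by simp
      moreover have "exp (- l * t) > 0" by simp
      moreover have wb: "\<bar>w t x\<bar> \<le> B" using bnd that(1) by blast
      ultimately have "exp (- l * t) * \<bar>w t x\<bar> \<le> 1 * B"
        by (intro mult_mono) auto
      hence "\<bar>exp (- l * t) * w t x\<bar> \<le> B" by (simp add: abs_mult)
      hence a1: "exp (- l * t) * w t x \<ge> - B" by linarith
      have "e * (1 + x^2 + 2*t) \<ge> e * (1 + x^2)" using e t0 by (simp add: mult_left_mono)
      thus ?thesis using a1 Rbig[OF that(2)] unfolding y_def by linarith
    qed
    define S where "S = {0..T} \<times> {-R..R}"
    have Scomp: "compact S" unfolding S_def by (intro compact_Times compact_Icc)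
    have "sqrt (B / e) \<ge> 0" using B0 e by simp
    hence x1R: "\<bar>x1\<bar> < R" unfolding R_def by linarith
    have p1S: "(t1, x1) \<in> S" unfolding S_def using t1 x1R by auto
    have Ssub: "S \<subseteq> {0..T} \<times> UNIV" unfolding S_def by auto
    have contS: "continuous_on S (\<lambda>p. y (fst p) (snd p))"
      unfolding y_def
      by (intro continuous_intros continuous_on_subset[OF cont Ssub])
    obtain p0 where p0S: "p0 \<in> S" and p0min: "\<forall>q\<in>S. y (fst p0) (snd p0) \<le> y (fst q) (snd q)"
      using continuous_attains_inf[OF Scomp _ contS] p1S by blast
    define t0 where "t0 = fst p0"
    define x0 where "x0 = snd p0"
    have t0T: "t0 \<in> {0..T}" using p0S unfolding S_def t0_def by auto
    have y0le1: "y t0 x0 \<le> y t1 x1" using p0min p1S unfolding t0_def x0_def by force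
    hence y0neg: "y t0 x0 < 0" using y1neg by simp
    have globmin: "y t0 x0 \<le> y t x" if "t \<in> {0..T}" for t x
    proof (cases "\<bar>x\<bar> \<le> R")
      case True
      hence "(t, x) \<in> S" unfolding S_def using that by auto
      thus ?thesis using p0min unfolding t0_def x0_def by force
    next
      case False
      hence "\<bar>x\<bar> \<ge> R" by simp
      hence "y t x \<ge> 0" by (rule youter[OF that])
      thus ?thesis using y0neg by simp
    qed
    have t0pos: "t0 > 0"
    proof (rule ccontr)
      assume "\<not> t0 > 0"
      hence "t0 = 0" using t0T by simp
      moreover have "y 0 x0 > 0" unfolding y_def using init e
        by (simp add: add_pos_nonneg)
      ultimately show False using y0neg by simp
    qed
    have t0I: "t0 \<in> {0<..T}" using t0pos t0T by simp
    define E where "E = exp (- l * t0)"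
    define W where "W = w t0 x0"
    have Epos: "E > 0" unfolding E_def by simp
    have EWneg: "E * W < 0"
    proof -
      have "e * (1 + x0^2 + 2*t0) > 0" using e t0pos
        by (intro mult_pos_pos) (auto simp: add_pos_nonneg)
      thus ?thesis using y0neg unfolding y_def E_def W_def by linarith
    qed
    have fx: "((\<lambda>x. y t0 x) has_real_derivative (E * wx t0 x + e * (2 * x))) (at x)" for x
    proof -
      have h1: "(w t0 has_real_derivative wx t0 x) (at x)" using dx t0I by blast
      have px: "((\<lambda>x. x^2) has_real_derivative 2 * x) (at x)" using DERIV_pow[of 2 x] by simp
      have "((\<lambda>x. E * w t0 x + e * (1 + x^2 + 2*t0)) has_real_derivative
             (E * wx t0 x + e * (0 + 2 * x + 0))) (at x)"
        by (intro DERIV_add DERIV_cmult h1 DERIV_const px)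
      thus ?thesis unfolding y_def E_def by simp
    qed
    have fxx: "((\<lambda>x. E * wx t0 x + e * (2 * x)) has_real_derivative (E * wxx t0 x0 + e * 2)) (at x0)"
    proof -
      have h1: "(wx t0 has_real_derivative wxx t0 x0) (at x0)" using dxx t0I by blast
      have "((\<lambda>x. E * wx t0 x + e * (2 * x)) has_real_derivative (E * wxx t0 x0 + e * (2 * 1))) (at x0)"
        by (intro DERIV_add DERIV_cmult h1 DERIV_ident)
      thus ?thesis by simp
    qed
    have Dx: "E * wxx t0 x0 + e * 2 \<ge> 0"
      by (rule second_deriv_min[OF fx fxx]) (use globmin t0T in auto)
    define Dt where "Dt = exp (- l * t0) * (- l) * W + E * wt t0 x0 + e * 2"
    have ft: "((\<lambda>s. y s x0) has_real_derivative Dt) (at t0)"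
    proof -
      have h1: "((\<lambda>s. w s x0) has_real_derivative wt t0 x0) (at t0)" using dt t0I by blast
      have he: "((\<lambda>s. exp (- l * s)) has_real_derivative exp (- l * t0) * (- l * 1)) (at t0)"
        by (intro DERIV_fun_exp[where g="\<lambda>s. - l * s"] DERIV_cmult DERIV_ident)
      note h2 = DERIV_mult[OF he h1]
      have h3: "((\<lambda>r. e * (1 + x0 ^ 2 + 2 * r)) has_real_derivative e * 2) (at t0)"
        by (auto intro!: derivative_eq_intros)
      note h4 = DERIV_add[OF h2 h3]
      show ?thesis unfolding y_def
        by (rule DERIV_cong[OF h4]) (simp add: Dt_def W_def E_def algebra_simps)
    qed
    have Dtle: "Dt \<le> 0"
    proof (rule ccontr)
      assume "\<not> Dt \<le> 0"
      hence "Dt > 0" by simp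
      from DERIV_pos_inc_left[OF ft this] obtain d where d: "d > 0"
        and inc: "\<forall>h>0. h < d \<longrightarrow> y (t0 - h) x0 < y t0 x0" by blast
      define hh where "hh = min (d / 2) t0"
      have hh: "hh > 0" "hh < d" "hh \<le> t0" using d t0pos by (auto simp: hh_def)
      have "t0 - hh \<in> {0..T}" using hh t0T by auto
      hence "y t0 x0 \<le> y (t0 - hh) x0" by (rule globmin)
      moreover have "y (t0 - hh) x0 < y t0 x0" using inc hh by blast
      ultimately show False by simp
    qed
    have ine: "wt t0 x0 \<ge> wxx t0 x0 - a t0 x0 * W" using ineq t0I unfolding W_def by blast
    have "\<bar>a t0 x0\<bar> \<le> K" using abnd t0I by blast
    hence "- K \<le> a t0 x0" by (simp add: abs_le_iff)
    moreover have "- \<bar>K\<bar> \<le> - K" by simp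
    ultimately have al: "a t0 x0 + l > 0" unfolding l_def by linarith
    have "E * wt t0 x0 \<ge> E * (wxx t0 x0 - a t0 x0 * W)" using ine Epos by (simp add: mult_left_mono)
    hence i1: "E * wt t0 x0 \<ge> E * wxx t0 x0 - a t0 x0 * (E * W)" by (simp add: algebra_simps)
    have i2: "(a t0 x0 + l) * (E * W) < 0" using al EWneg by (simp add: mult_pos_neg)
    have "Dt = E * wt t0 x0 - l * (E * W) + e * 2" unfolding Dt_def E_def by (simp add: algebra_simps)
    hence "Dt > E * wxx t0 x0 + e * 2" using i1 i2 by (simp add: algebra_simps)
    thus False using Dx Dtle by simp
  qed
qed


lemma decay_bound:
  fixes f :: "real \<Rightarrow> real"
  assumes asym: "f \<sim>[at_infinity] (\<lambda>x. 6 / x^2)" and bnd: "bounded (range f)"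
  shows "\<exists>C\<ge>0. \<forall>x. \<bar>f x\<bar> \<le> C * inverse (1 + x^2)"
proof -
  from bnd obtain M where "\<forall>y\<in>range f. norm y \<le> M" unfolding bounded_iff by blast
  hence M: "\<forall>x. \<bar>f x\<bar> \<le> M" by auto
  have "f \<in> O[at_infinity](\<lambda>x. 6/x^2)" by (rule asymp_equiv_imp_bigo[OF asym])
  then obtain c where c: "c > 0" and ev: "eventually (\<lambda>x. norm (f x) \<le> c * norm (6/x^2)) at_infinity"
    by (rule landau_o.bigE)
  then obtain b where b: "\<forall>x. norm x \<ge> b \<longrightarrow> norm (f x) \<le> c * norm (6/x^2)"
    unfolding eventually_at_infinity by blast
  define b1 where "b1 = max b 1"
  have M0: "M \<ge> 0" using M[rule_format, of 0] by linarith
  have C0: "0 \<le> 12*c + M*(1+b1^2)" using c M0 by (simp add: add_nonneg_nonneg)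
  show ?thesis
  proof (intro exI[of _ "12*c + M*(1+b1^2)"] conjI allI C0)
    fix x :: real
    have sqx: "x^2 \<ge> 0" by simp
    have den: "1 + x^2 > 0" using sqx by linarith
    have inv0: "inverse (1 + x^2) \<ge> 0" using den by simp
    have extra0: "M*(1+b1^2)*inverse(1+x^2) \<ge> 0" using M0 inv0 by (simp add: mult_nonneg_nonneg)
    have extra1: "12*c*inverse(1+x^2) \<ge> 0" using c inv0 by (simp add: mult_nonneg_nonneg)
    show "\<bar>f x\<bar> \<le> (12*c + M*(1+b1^2)) * inverse (1+x^2)"
    proof (cases "\<bar>x\<bar> \<ge> b1")
      case True
      then have xb: "\<bar>x\<bar> \<ge> b" and x1: "\<bar>x\<bar> \<ge> 1" by (auto simp: b1_def)
      have fx: "\<bar>f x\<bar> \<le> c * (6/x^2)" using b xb by auto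
      have x2: "x^2 \<ge> 1" using power_mono[OF x1, of 2] by simp
      have xp: "x^2 > 0" using x2 by linarith
      have "6 + 6*x^2 \<le> 12*x^2" using x2 by linarith
      hence "(6 + 6*x^2)/x^2 \<le> 12" using xp by (simp add: pos_divide_le_eq)
      hence "6/x^2 \<le> 12 * inverse (1+x^2)" using x2 den by (simp add: field_simps)
      hence "c * (6/x^2) \<le> c * (12 * inverse (1+x^2))" using c by (intro mult_left_mono) auto
      hence "\<bar>f x\<bar> \<le> 12*c*inverse(1+x^2)" using fx by simp
      thus ?thesis using extra0 by (simp add: ring_distribs)
    next
      case False
      hence "\<bar>x\<bar> \<le> b1" by simp
      hence x2le: "x^2 \<le> b1^2" using power_mono[OF _ abs_ge_zero, of x b1 2] by simp
      have q: "(1+b1^2)*inverse(1+x^2) \<ge> 1" using den x2le by (simp add: field_simps)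
      have "M*1 \<le> M*((1+b1^2)*inverse(1+x^2))" by (rule mult_left_mono[OF q M0])
      hence "\<bar>f x\<bar> \<le> M*(1+b1^2)*inverse(1+x^2)" using M[rule_format, of x] by (simp add: mult.assoc)
      thus ?thesis using extra1 by (simp add: ring_distribs)
    qed
  qed
qed

lemma integrable_inv_sq: "integrable lborel (\<lambda>x::real. inverse (1 + x^2))"
  using integrable_inverse_1_plus_square by (simp add: set_integrable_def einterval_def)

theorem mainTheorem3:
  fixes phi fp fm :: "real \<Rightarrow> real"
    and g phic :: "real \<Rightarrow> real \<Rightarrow> real"
    and c :: real and U :: "real \<Rightarrow> real" and u :: "real \<Rightarrow> real \<Rightarrow> real"
  assumes phi_smooth: "smooth_fun phi"
    and phi_lim: "(phi \<longlongrightarrow> 0) at_infinity"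
    and fp_eq: "equilibrium phi fp" and fm_eq: "equilibrium phi fm"
    and fp_reg: "smooth_fun fp" "bounded (range fp)" "bounded (range (deriv fp))"
                "bounded (range (deriv (deriv fp)))"
    and fm_reg: "smooth_fun fm" "bounded (range fm)" "bounded (range (deriv fm))"
                "bounded (range (deriv (deriv fm)))"
    and fp_asym: "fp \<sim>[at_infinity] (\<lambda>x. 6 / x^2)"
    and fm_asym: "fm \<sim>[at_infinity] (\<lambda>x. 6 / x^2)"
    and order: "\<forall>x. fp x > fm x"
    and no_between: "\<not> (\<exists>f2. equilibrium phi f2 \<and> (\<forall>x. fp x > f2 x \<and> f2 x > fm x))"
    and family_eq: "\<forall>c'\<in>{0..<1}. equilibrium (phic c') (g c')"
    and g0: "g 0 = fm" and phic0: "phic 0 = phi"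
    and family_mono: "\<forall>a\<in>{0..<1}. \<forall>b\<in>{0..<1}. a > b \<longrightarrow>
                         (\<forall>x. phic a x < phic b x \<and> g a x > g b x)"
    and c_range: "c \<in> {0..<1}"
    and U_W: "U \<in> {v. C2_fun v \<and> (\<forall>x. g c x < v x \<and> v x < fp x)}"
    and U_reg: "bounded (range (deriv U))" "bounded (range (deriv (deriv U)))"
    and sol: "cauchy_solution phi U u"
  shows "(\<forall>t>0. integrable lborel (u t) \<and> bounded (range (u t)))
         \<and> (c \<in> {0<..<1} \<longrightarrow> \<not> (\<forall>x. ((\<lambda>t. u t x) \<longlongrightarrow> fm x) at_top))"
proof -
  define gc where "gc = g c"
  note SS = sol[unfolded cauchy_solution_def]
  have u0: "u 0 = U" using SS by (rule conjunct1)
  have ucont0: "continuous_on ({0..} \<times> UNIV) (\<lambda>(t,x). u t x)"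
    using SS by (elim conjE)
  have eqf: "(\<lambda>(t,x). u t x) = (\<lambda>p. u (fst p) (snd p))" by (auto simp: fun_eq_iff)
  have ucont: "continuous_on ({0..} \<times> UNIV) (\<lambda>p. u (fst p) (snd p))"
    using ucont0 by (simp only: eqf)
  have udt: "\<forall>t>0. \<forall>x. (\<lambda>s. u s x) differentiable (at t)"
    using SS by (elim conjE)
  have udx: "\<forall>t>0. \<forall>x. u t differentiable (at x) \<and> deriv (u t) differentiable (at x)"
    using SS by (elim conjE)
  have upde: "\<forall>t>0. \<forall>x. deriv (\<lambda>s. u s x) t = deriv (deriv (u t)) x - (u t x)^2 + phi x"
    using SS by (elim conjE)
  have ubnd: "\<forall>T\<ge>0. bounded ((\<lambda>(t,x). u t x) ` ({0..T} \<times> UNIV))"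
    using SS by (elim conjE)
  have strip: "\<exists>Bu. \<forall>t\<in>{0..T}. \<forall>x. \<bar>u t x\<bar> \<le> Bu" if T: "T \<ge> 0" for T
  proof -
    from ubnd T obtain a where a: "\<forall>y\<in>(\<lambda>(t,x). u t x) ` ({0..T} \<times> UNIV). norm y \<le> a"
      unfolding bounded_iff by blast
    have "\<bar>u t x\<bar> \<le> a" if "t \<in> {0..T}" for t x
    proof -
      have "u t x \<in> (\<lambda>(t,x). u t x) ` ({0..T} \<times> UNIV)"
        by (rule image_eqI[of _ _ "(t,x)"]) (use that in auto)
      thus ?thesis using a by auto
    qed
    thus ?thesis by blast
  qed
  have gc_eq: "equilibrium (phic c) gc" using family_eq c_range unfolding gc_def by blast
  have gcd: "\<forall>x. gc differentiable (at x)" and gcdd: "\<forall>x. deriv gc differentiable (at x)"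
    and gcpde: "\<forall>x. deriv (deriv gc) x - (gc x)^2 + phic c x = 0"
    using gc_eq unfolding equilibrium_def C2_fun_def by blast+
  have fpd: "\<forall>x. fp differentiable (at x)" and fpdd: "\<forall>x. deriv fp differentiable (at x)"
    and fppde: "\<forall>x. deriv (deriv fp) x - (fp x)^2 + phi x = 0"
    using fp_eq unfolding equilibrium_def C2_fun_def by blast+
  have gc_ge: "fm x \<le> gc x" and phic_le: "phic c x \<le> phi x" for x
  proof -
    have "fm x \<le> gc x \<and> phic c x \<le> phi x"
    proof (cases "c = 0")
      case True thus ?thesis using g0 phic0 unfolding gc_def by simp
    next
      case False
      hence "c > 0" using c_range by simp
      hence "phic c x < phic 0 x \<and> g c x > g 0 x" using family_mono c_range by auto
      thus ?thesis using g0 phic0 unfolding gc_def by simp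
    qed
    thus "fm x \<le> gc x" "phic c x \<le> phi x" by auto
  qed
  have gc_U: "gc x < U x" and U_fp: "U x < fp x" for x using U_W unfolding gc_def by auto
  from fp_reg(2) obtain Mp where "\<forall>y\<in>range fp. norm y \<le> Mp" unfolding bounded_iff by blast
  hence Mp: "\<forall>x. \<bar>fp x\<bar> \<le> Mp" by auto
  from fm_reg(2) obtain Mm where "\<forall>y\<in>range fm. norm y \<le> Mm" unfolding bounded_iff by blast
  hence Mm: "\<forall>x. \<bar>fm x\<bar> \<le> Mm" by auto
  have Mg: "\<bar>gc x\<bar> \<le> Mp + Mm" for x
    using gc_ge[of x] gc_U[of x] U_fp[of x] Mp[rule_format, of x] Mm[rule_format, of x] by linarith
  have gccont: "continuous_on UNIV gc"
    using gcd by (intro differentiable_imp_continuous_on) (simp add: differentiable_on_def)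
  have fpcont: "continuous_on UNIV fp"
    using fpd by (intro differentiable_imp_continuous_on) (simp add: differentiable_on_def)
  have between: "gc x \<le> u T x \<and> u T x \<le> fp x" if T: "T \<ge> 0" for T x
  proof -
    obtain Bu where Bu: "\<forall>t\<in>{0..T}. \<forall>x. \<bar>u t x\<bar> \<le> Bu" using strip[OF T] by blast
    have contT: "continuous_on ({0..T} \<times> UNIV) (\<lambda>p. u (fst p) (snd p))"
      by (rule continuous_on_subset[OF ucont]) auto
    have gcs: "continuous_on ({0..T} \<times> UNIV) (\<lambda>p. gc (snd p))"
      by (rule continuous_on_compose2[OF gccont continuous_on_snd]) auto
    have fps: "continuous_on ({0..T} \<times> UNIV) (\<lambda>p. fp (snd p))"
      by (rule continuous_on_compose2[OF fpcont continuous_on_snd]) auto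
    have dts: "((\<lambda>s. u s x) has_real_derivative deriv (\<lambda>s. u s x) t) (at t)" if "t > 0" for t x
      using udt that by (simp add: DERIV_deriv_iff_real_differentiable)
    have dxs: "(u t has_real_derivative deriv (u t) x) (at x)" if "t > 0" for t x
      using udx that by (simp add: DERIV_deriv_iff_real_differentiable)
    have dxxs: "(deriv (u t) has_real_derivative deriv (deriv (u t)) x) (at x)" if "t > 0" for t x
      using udx that by (simp add: DERIV_deriv_iff_real_differentiable)
    have gcd1: "(gc has_real_derivative deriv gc x) (at x)" for x
      using gcd by (simp add: DERIV_deriv_iff_real_differentiable)
    have gcd2: "(deriv gc has_real_derivative deriv (deriv gc) x) (at x)" for x
      using gcdd by (simp add: DERIV_deriv_iff_real_differentiable)
    have fpd1: "(fp has_real_derivative deriv fp x) (at x)" for x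
      using fpd by (simp add: DERIV_deriv_iff_real_differentiable)
    have fpd2: "(deriv fp has_real_derivative deriv (deriv fp) x) (at x)" for x
      using fpdd by (simp add: DERIV_deriv_iff_real_differentiable)
    have low: "\<forall>t\<in>{0..T}. \<forall>x. u t x - gc x \<ge> 0"
    proof (rule comparison[where w="\<lambda>t x. u t x - gc x"
          and wt="\<lambda>t x. deriv (\<lambda>s. u s x) t"
          and wx="\<lambda>t x. deriv (u t) x - deriv gc x"
          and wxx="\<lambda>t x. deriv (deriv (u t)) x - deriv (deriv gc) x"
          and a="\<lambda>t x. u t x + gc x" and K="Bu + Mp + Mm" and B="Bu + Mp + Mm"])
      show "continuous_on ({0..T} \<times> UNIV) (\<lambda>p. u (fst p) (snd p) - gc (snd p))"
        by (intro continuous_on_diff contT gcs)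
      show "\<forall>t\<in>{0..T}. \<forall>x. \<bar>u t x - gc x\<bar> \<le> Bu + Mp + Mm"
      proof (intro ballI allI)
        fix t x assume "t \<in> {0..T}"
        hence "\<bar>u t x\<bar> \<le> Bu" using Bu by blast
        thus "\<bar>u t x - gc x\<bar> \<le> Bu + Mp + Mm" using Mg[of x] abs_triangle_ineq4[of "u t x" "gc x"] by linarith
      qed
      show "\<forall>x. u 0 x - gc x > 0" using u0 gc_U by simp
      show "\<forall>t\<in>{0<..T}. \<forall>x. ((\<lambda>s. u s x - gc x) has_real_derivative deriv (\<lambda>s. u s x) t) (at t)"
        using DERIV_diff[OF dts DERIV_const] by simp
      show "\<forall>t\<in>{0<..T}. \<forall>x. ((\<lambda>x. u t x - gc x) has_real_derivative deriv (u t) x - deriv gc x) (at x)"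
        using DERIV_diff[OF dxs gcd1] by simp
      show "\<forall>t\<in>{0<..T}. \<forall>x. ((\<lambda>x. deriv (u t) x - deriv gc x) has_real_derivative
              deriv (deriv (u t)) x - deriv (deriv gc) x) (at x)"
        using DERIV_diff[OF dxxs gcd2] by simp
      show "\<forall>t\<in>{0<..T}. \<forall>x. deriv (\<lambda>s. u s x) t \<ge>
              deriv (deriv (u t)) x - deriv (deriv gc) x - (u t x + gc x) * (u t x - gc x)"
      proof (intro ballI allI)
        fix t x assume t: "t \<in> {0<..T}"
        have e1: "deriv (\<lambda>s. u s x) t = deriv (deriv (u t)) x - (u t x)^2 + phi x" using upde t by simp
        have e2: "deriv (deriv gc) x = (gc x)^2 - phic c x" using gcpde[rule_format, of x] by linarith
        have "deriv (deriv (u t)) x - deriv (deriv gc) x - (u t x + gc x) * (u t x - gc x)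
              = deriv (deriv (u t)) x - (u t x)^2 + phic c x"
          by (simp add: e2 algebra_simps power2_eq_square)
        thus "deriv (\<lambda>s. u s x) t \<ge>
              deriv (deriv (u t)) x - deriv (deriv gc) x - (u t x + gc x) * (u t x - gc x)"
          using e1 phic_le[of x] by linarith
      qed
      show "\<forall>t\<in>{0<..T}. \<forall>x. \<bar>u t x + gc x\<bar> \<le> Bu + Mp + Mm"
      proof (intro ballI allI)
        fix t x assume "t \<in> {0<..T}"
        hence "\<bar>u t x\<bar> \<le> Bu" using Bu by auto
        thus "\<bar>u t x + gc x\<bar> \<le> Bu + Mp + Mm" using Mg[of x] abs_triangle_ineq[of "u t x" "gc x"] by linarith
      qed
    qed
    have up: "\<forall>t\<in>{0..T}. \<forall>x. fp x - u t x \<ge> 0"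
    proof (rule comparison[where w="\<lambda>t x. fp x - u t x"
          and wt="\<lambda>t x. - deriv (\<lambda>s. u s x) t"
          and wx="\<lambda>t x. deriv fp x - deriv (u t) x"
          and wxx="\<lambda>t x. deriv (deriv fp) x - deriv (deriv (u t)) x"
          and a="\<lambda>t x. fp x + u t x" and K="Bu + Mp" and B="Bu + Mp"])
      show "continuous_on ({0..T} \<times> UNIV) (\<lambda>p. fp (snd p) - u (fst p) (snd p))"
        by (intro continuous_on_diff contT fps)
      show "\<forall>t\<in>{0..T}. \<forall>x. \<bar>fp x - u t x\<bar> \<le> Bu + Mp"
      proof (intro ballI allI)
        fix t x assume "t \<in> {0..T}"
        hence "\<bar>u t x\<bar> \<le> Bu" using Bu by blast
        thus "\<bar>fp x - u t x\<bar> \<le> Bu + Mp" using Mp[rule_format, of x] abs_triangle_ineq4[of "fp x" "u t x"] by linarith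
      qed
      show "\<forall>x. fp x - u 0 x > 0" using u0 U_fp by simp
      show "\<forall>t\<in>{0<..T}. \<forall>x. ((\<lambda>s. fp x - u s x) has_real_derivative - deriv (\<lambda>s. u s x) t) (at t)"
        using DERIV_diff[OF DERIV_const dts] by simp
      show "\<forall>t\<in>{0<..T}. \<forall>x. ((\<lambda>x. fp x - u t x) has_real_derivative deriv fp x - deriv (u t) x) (at x)"
        using DERIV_diff[OF fpd1 dxs] by simp
      show "\<forall>t\<in>{0<..T}. \<forall>x. ((\<lambda>x. deriv fp x - deriv (u t) x) has_real_derivative
              deriv (deriv fp) x - deriv (deriv (u t)) x) (at x)"
        using DERIV_diff[OF fpd2 dxxs] by simp
      show "\<forall>t\<in>{0<..T}. \<forall>x. - deriv (\<lambda>s. u s x) t \<ge>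
              deriv (deriv fp) x - deriv (deriv (u t)) x - (fp x + u t x) * (fp x - u t x)"
      proof (intro ballI allI)
        fix t x assume t: "t \<in> {0<..T}"
        have e1: "deriv (\<lambda>s. u s x) t = deriv (deriv (u t)) x - (u t x)^2 + phi x" using upde t by simp
        have e2: "deriv (deriv fp) x = (fp x)^2 - phi x" using fppde[rule_format, of x] by linarith
        have "deriv (deriv fp) x - deriv (deriv (u t)) x - (fp x + u t x) * (fp x - u t x)
              = - (deriv (deriv (u t)) x - (u t x)^2 + phi x)"
          by (simp add: e2 algebra_simps power2_eq_square)
        thus "- deriv (\<lambda>s. u s x) t \<ge>
              deriv (deriv fp) x - deriv (deriv (u t)) x - (fp x + u t x) * (fp x - u t x)"
          using e1 by linarith
      qed
      show "\<forall>t\<in>{0<..T}. \<forall>x. \<bar>fp x + u t x\<bar> \<le> Bu + Mp"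
      proof (intro ballI allI)
        fix t x assume "t \<in> {0<..T}"
        hence "\<bar>u t x\<bar> \<le> Bu" using Bu by auto
        thus "\<bar>fp x + u t x\<bar> \<le> Bu + Mp" using Mp[rule_format, of x] abs_triangle_ineq[of "fp x" "u t x"] by linarith
      qed
    qed
    show ?thesis using low up T by auto
  qed
  obtain Cp where Cp: "Cp \<ge> 0" "\<forall>x. \<bar>fp x\<bar> \<le> Cp * inverse (1 + x^2)"
    using decay_bound[OF fp_asym fp_reg(2)] by blast
  obtain Cm where Cm: "Cm \<ge> 0" "\<forall>x. \<bar>fm x\<bar> \<le> Cm * inverse (1 + x^2)"
    using decay_bound[OF fm_asym fm_reg(2)] by blast
  have part1: "integrable lborel (u t) \<and> bounded (range (u t))" if t: "t > 0" for t
  proof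
    obtain Bu where Bu: "\<forall>s\<in>{0..t}. \<forall>x. \<bar>u s x\<bar> \<le> Bu" using strip[of t] t by auto
    show "bounded (range (u t))" unfolding bounded_iff using Bu t by (intro exI[of _ Bu]) auto
    have ucd: "continuous_on UNIV (u t)"
      using udx t by (intro differentiable_imp_continuous_on) (simp add: differentiable_on_def)
    have meas: "u t \<in> borel_measurable lborel"
      using borel_measurable_continuous_onI[OF ucd] by simp
    have intb: "integrable lborel (\<lambda>x. (Cp + Cm) * inverse (1 + x^2))"
      using integrable_inv_sq by simp
    show "integrable lborel (u t)"
    proof (rule Bochner_Integration.integrable_bound[OF intb meas], rule AE_I2)
      fix x :: real
      have "1 + x^2 > 0" using zero_le_power2[of x] by linarith
      hence nn: "(Cp + Cm) * inverse (1 + x^2) \<ge> 0" using Cp Cm by simp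
      have b1: "gc x \<le> u t x" "u t x \<le> fp x" using between[of t x] t by auto
      have "\<bar>u t x\<bar> \<le> \<bar>fp x\<bar> + \<bar>fm x\<bar>"
        using b1 gc_ge[of x] by linarith
      also have "\<dots> \<le> Cp * inverse (1 + x^2) + Cm * inverse (1 + x^2)"
        using Cp(2)[rule_format, of x] Cm(2)[rule_format, of x] by linarith
      also have "\<dots> = (Cp + Cm) * inverse (1 + x^2)" by (simp add: ring_distribs)
      finally show "norm (u t x) \<le> norm ((Cp + Cm) * inverse (1 + x^2))"
        using nn by simp
    qed
  qed
  have part2: "\<not> (\<forall>x. ((\<lambda>t. u t x) \<longlongrightarrow> fm x) at_top)" if c: "c \<in> {0<..<1}"
  proof
    assume "\<forall>x. ((\<lambda>t. u t x) \<longlongrightarrow> fm x) at_top"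
    hence lim: "((\<lambda>t. u t 0) \<longlongrightarrow> fm 0) at_top" by blast
    have ev: "eventually (\<lambda>t. gc 0 \<le> u t 0) at_top"
      using between by (intro eventually_at_top_linorderI[of 0]) auto
    have "gc 0 \<le> fm 0" by (rule tendsto_lowerbound[OF lim ev]) simp
    have c0: "c > 0" using c by simp
    have "c \<in> {0..<1}" "(0::real) \<in> {0..<1}" using c_range by auto
    hence "\<forall>x. phic c x < phic 0 x \<and> g c x > g 0 x" using family_mono c0 by blast
    hence "g c 0 > g 0 0" by blast
    moreover have "gc 0 > fm 0" using calculation g0 unfolding gc_def by simp
    ultimately show False using \<open>gc 0 \<le> fm 0\<close> by simp
  qed
  have A: "\<forall>t>0. integrable lborel (u t) \<and> bounded (range (u t))"
    using part1 by blast
  have B: "c \<in> {0<..<1} \<longrightarrow> \<not> (\<forall>x. ((\<lambda>t. u t x) \<longlongrightarrow> fm x) at_top)"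
    using part2 by blast
  show ?thesis using A B by (rule conjI)
qed

end
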